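(* For any integers $n\ge g\ge1$, $\Delta\big(\tfrac{R(g,n)}{n}\big)\le\tfrac gn$.
   Context: A set $S$ of integers is a $B^*[g]$ set if for every integer $m$ there are at most $g$ ordered pairs $(s_1,s_2)\in S\times S$ with $s_1+s_2=m$. $R(g,n)$ is the maximum cardinality of a $B^*[g]$ set contained in $\{1,2,\dots,n\}$. Let $\lambda$ be Lebesgue measure; a set $C\subseteq\mathbb{R}$ is symmetric if there is $c$ with $c+x\in C\iff c-x\in C$; $D(A):=\sup\{\lambda(C): C\subseteq A \text{ measurable and symmetric}\}$, and $\Delta(\varepsilon):=\inf\{D(A): A\subseteq[0,1) \text{ measurable},\ \lambda(A)=\varepsilon\}$ for $0\le\varepsilon\le1$. *)

theory Defs
  imports "HOL-Analysis.Analysis"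
begin

definition Bstar :: "nat \<Rightarrow> int set \<Rightarrow> bool" where
  "Bstar g S \<longleftrightarrow>
     (\<forall>m::int. finite {p \<in> S \<times> S. fst p + snd p = m} \<and>
               card {p \<in> S \<times> S. fst p + snd p = m} \<le> g)"

definition R :: "nat \<Rightarrow> nat \<Rightarrow> nat" where
  "R g n = Max {card S | S. S \<subseteq> {1..int n} \<and> Bstar g S}"

definition symmetric_set :: "real set \<Rightarrow> bool" where
  "symmetric_set C \<longleftrightarrow> (\<exists>c. \<forall>x. c + x \<in> C \<longleftrightarrow> c - x \<in> C)"

definition D :: "real set \<Rightarrow> real" where
  "D A = Sup {measure lebesgue C | C. C \<subseteq> A \<and> C \<in> sets lebesgue \<and> symmetric_set C}"

definition Delta :: "real \<Rightarrow> real" where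
  "Delta \<epsilon> = Inf {D A | A. A \<subseteq> {0..<1} \<and> A \<in> sets lebesgue \<and> measure lebesgue A = \<epsilon>}"

end

theory Submission imports Defs begin
lemma l1: fixes l u :: real assumes "l \<le> u" shows "measure lebesgue {l..<u} = u - l"
  using assms by (subst measure_completion) auto
lemma l2: fixes l u :: real assumes "l \<le> u" shows "measure lebesgue {l..u} = u - l"
  using assms by (subst measure_completion) auto
lemma l3: fixes l u :: real shows "{l..u} \<in> fmeasurable lebesgue"
  by (metis box_real(2) lmeasurable_cbox)
lemma l4: fixes l u :: real shows "{l..<u} \<in> fmeasurable lebesgue"
  by (rule fmeasurableI2[OF l3[of l u]]) auto
lemma l5: fixes l u :: real shows "{l..<u} \<in> sets lebesgue" "{l..u} \<in> sets lebesgue"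
  using l3 l4 by auto
lemma card_P:
  fixes S :: "int set" and a :: int
  assumes "Bstar g S"
  shows "card {s\<in>S. a - s \<in> S} \<le> g" "finite {s\<in>S. a - s \<in> S}"
proof -
  let ?Q = "{p \<in> S \<times> S. fst p + snd p = a}"
  have fQ: "finite ?Q" "card ?Q \<le> g" using assms unfolding Bstar_def by auto
  have eq: "?Q = (\<lambda>s. (s, a - s)) ` {s\<in>S. a - s \<in> S}" by force
  have inj: "inj_on (\<lambda>s. (s, a - s)) {s\<in>S. a - s \<in> S}" by (rule inj_onI) simp
  have "card ?Q = card {s\<in>S. a - s \<in> S}" unfolding eq by (rule card_image[OF inj])
  moreover have "finite {s\<in>S. a - s \<in> S}"
    using fQ(1) unfolding eq by (rule finite_imageD[OF _ inj])
  ultimately have "card ?Q = card {s\<in>S. a - s \<in> S}" "finite {s\<in>S. a - s \<in> S}" by blast+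
  then show "card {s\<in>S. a - s \<in> S} \<le> g" "finite {s\<in>S. a - s \<in> S}" using fQ by auto
qed

lemma key:
  fixes S :: "int set" and n :: nat and c :: real and C :: "real set"
  assumes n: "n > 0" and B: "Bstar g S"
    and CA: "C \<subseteq> (\<Union>s\<in>S. {(real_of_int s - 1)/n ..< real_of_int s / n})"
    and Cm: "C \<in> sets lebesgue" and sym: "\<forall>x. c + x \<in> C \<longleftrightarrow> c - x \<in> C"
  shows "measure lebesgue C \<le> real g / real n"
proof -
  define u where "u = 2 * c * n"
  define a where "a = floor u + 1"
  define d where "d = real_of_int a - u"
  have d: "0 < d" "d \<le> 1" unfolding d_def a_def by linarith+
  define P1 where "P1 = {s\<in>S. a - s \<in> S}"
  define P2 where "P2 = {s\<in>S. (a + 1) - s \<in> S}"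
  have P1: "finite P1" "card P1 \<le> g" unfolding P1_def using card_P[OF B, of a] by simp_all
  have P2: "finite P2" "card P2 \<le> g" unfolding P2_def using card_P[OF B, of "a + 1"] by simp_all
  define J1 where "J1 s = {(real_of_int s - d)/n .. real_of_int s / n}" for s :: int
  define J2 where "J2 s = {(real_of_int s - 1)/n .. (real_of_int s - d) / n}" for s :: int
  define U where "U = (\<Union>s\<in>P1. J1 s) \<union> (\<Union>s\<in>P2. J2 s)"
  have nr: "real n > 0" using n by simp
  have CU: "C \<subseteq> U"
  proof
    fix x assume xC: "x \<in> C"
    from xC have "x \<in> (\<Union>s\<in>S. {(real_of_int s - 1)/n ..< real_of_int s / n})" by (rule subsetD[OF CA])
    then obtain s where s0: "s \<in> S" "x \<in> {(real_of_int s - 1)/n ..< real_of_int s / n}" by (rule UN_E)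
    have s: "(real_of_int s - 1)/n \<le> x" "x < real_of_int s / n" using s0(2) by simp_all
    have "c + (x - c) \<in> C" using xC by simp
    then have "c - (x - c) \<in> C" using sym by blast
    then have "c - (x - c) \<in> (\<Union>s\<in>S. {(real_of_int s - 1)/n ..< real_of_int s / n})" by (rule subsetD[OF CA])
    then obtain t where t0: "t \<in> S" "c - (x - c) \<in> {(real_of_int t - 1)/n ..< real_of_int t / n}" by (rule UN_E)
    have t: "(real_of_int t - 1)/n \<le> c - (x - c)" "c - (x - c) < real_of_int t / n" using t0(2) by simp_all
    have s': "real_of_int s - 1 \<le> n * x" "n * x < real_of_int s" using s nr
      by (simp_all add: pos_divide_le_eq pos_divide_less_eq pos_less_divide_eq pos_le_divide_eq mult.commute)
    have e: "u - n * x = (c - (x - c)) * n" unfolding u_def by (simp add: algebra_simps)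
    have t': "real_of_int t - 1 \<le> u - n * x" "u - n * x < real_of_int t" unfolding e using t nr
      by (simp_all only: pos_divide_le_eq pos_divide_less_eq pos_less_divide_eq pos_le_divide_eq)
    have xn: "x * n = n * x" by (rule mult.commute)
    show "x \<in> U"
    proof (cases "real_of_int (s + t) - 1 \<le> u")
      case True
      have "real_of_int (s + t - 1) \<le> u" "u < real_of_int (s + t - 1) + 1" using True s' t' by simp_all
      then have "floor u = s + t - 1" by (simp only: floor_eq_iff)
      then have "a = s + t" unfolding a_def by simp
      then have ax: "real_of_int a = real_of_int s + real_of_int t" by simp
      from \<open>a = s + t\<close> have "s \<in> P1" using s0(1) t0(1) unfolding P1_def by auto
      moreover have "x \<in> J1 s"
      proof -
        have "real_of_int s - d \<le> x * n" using ax t' xn unfolding d_def by linarith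
        then have 1: "(real_of_int s - d) / n \<le> x" by (simp only: pos_divide_le_eq[OF nr])
        have "x * n \<le> real_of_int s" using s' xn by linarith
        then have 2: "x \<le> real_of_int s / n" by (simp only: pos_le_divide_eq[OF nr])
        show ?thesis unfolding J1_def using 1 2 by simp
      qed
      ultimately show ?thesis unfolding U_def by blast
    next
      case False
      have "real_of_int (s + t - 2) \<le> u" "u < real_of_int (s + t - 2) + 1" using False s' t' by simp_all
      then have "floor u = s + t - 2" by (simp only: floor_eq_iff)
      then have "a + 1 = s + t" unfolding a_def by simp
      then have ax: "real_of_int a + 1 = real_of_int s + real_of_int t" by (metis of_int_add of_int_1)
      from \<open>a + 1 = s + t\<close> have "s \<in> P2" using s0(1) t0(1) unfolding P2_def by auto
      moreover have "x \<in> J2 s"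
      proof -
        have "real_of_int s - 1 \<le> x * n" using s' xn by linarith
        then have 1: "(real_of_int s - 1) / n \<le> x" by (simp only: pos_divide_le_eq[OF nr])
        have "x * n \<le> real_of_int s - d" using ax t' xn unfolding d_def by linarith
        then have 2: "x \<le> (real_of_int s - d) / n" by (simp only: pos_le_divide_eq[OF nr])
        show ?thesis unfolding J2_def using 1 2 by simp
      qed
      ultimately show ?thesis unfolding U_def by blast
    qed
  qed
  have J1m: "J1 s \<in> fmeasurable lebesgue" "measure lebesgue (J1 s) = d / n" for s
  proof -
    have "(real_of_int s - d)/n \<le> real_of_int s / n" using d nr by (intro divide_right_mono) auto
    then show "J1 s \<in> fmeasurable lebesgue" "measure lebesgue (J1 s) = d / n"
      unfolding J1_def using l3 l2 by (auto simp: diff_divide_distrib)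
  qed
  have J2m: "J2 s \<in> fmeasurable lebesgue" "measure lebesgue (J2 s) = (1 - d) / n" for s
  proof -
    have "(real_of_int s - 1)/n \<le> (real_of_int s - d) / n" using d nr by (intro divide_right_mono) auto
    then show "J2 s \<in> fmeasurable lebesgue" "measure lebesgue (J2 s) = (1 - d) / n"
      unfolding J2_def using l3 l2 by (auto simp: diff_divide_distrib)
  qed
  have Uf: "U \<in> fmeasurable lebesgue" unfolding U_def
    using P1 P2 J1m J2m by (intro fmeasurable.Un fmeasurable.finite_UN) auto
  have "measure lebesgue C \<le> measure lebesgue U" by (rule measure_mono_fmeasurable[OF CU Cm Uf])
  also have "\<dots> \<le> measure lebesgue (\<Union>s\<in>P1. J1 s) + measure lebesgue (\<Union>s\<in>P2. J2 s)"
    unfolding U_def using P1 P2 J1m J2m by (intro measure_Un_le sets.finite_UN) auto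
  also have "\<dots> \<le> (\<Sum>s\<in>P1. measure lebesgue (J1 s)) + (\<Sum>s\<in>P2. measure lebesgue (J2 s))"
    using P1 P2 J1m J2m by (intro add_mono measure_UNION_le) auto
  also have "\<dots> = card P1 * (d / n) + card P2 * ((1 - d) / n)"
    by (simp only: J1m(2) J2m(2) sum_constant)
  also have "\<dots> \<le> g * (d / n) + g * ((1 - d) / n)"
    using P1 P2 d nr by (intro add_mono mult_right_mono) auto
  also have "\<dots> = g * (d / n + (1 - d) / n)" by (rule distrib_left[symmetric])
  also have "\<dots> = g / n"
  proof -
    have "d / n + (1 - d) / n = 1 / real n" by (simp only: add_divide_distrib[symmetric]) simp
    then show ?thesis by simp
  qed
  finally show ?thesis .
qed
lemma D_nonneg:
  assumes "A \<subseteq> {0..<1}"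
  shows "0 \<le> D A"
proof -
  let ?M = "{measure lebesgue C | C. C \<subseteq> A \<and> C \<in> sets lebesgue \<and> symmetric_set C}"
  have "0 \<in> ?M"
  proof -
    have "symmetric_set {}" unfolding symmetric_set_def by auto
    then show ?thesis by force
  qed
  moreover have "bdd_above ?M"
  proof (rule bdd_aboveI)
    fix y assume "y \<in> ?M"
    then obtain C where C: "y = measure lebesgue C" "C \<subseteq> A" "C \<in> sets lebesgue" by blast
    have "measure lebesgue C \<le> measure lebesgue {0..<1::real}"
      using C assms by (intro measure_mono_fmeasurable l4) auto
    then show "y \<le> 1" using C l1[of 0 1] by simp
  qed
  ultimately show ?thesis unfolding D_def by (rule cSup_upper)
qed

theorem proposition3p1:
  fixes g n :: nat
  assumes "1 \<le> g" and "g \<le> n"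
  shows "Delta (real (R g n) / real n) \<le> real g / real n"
proof -
  have n: "n > 0" using assms by simp
  have nr: "real n > 0" using n by simp
  let ?K = "{card S | S. S \<subseteq> {1..int n} \<and> Bstar g S}"
  have "?K \<subseteq> card ` Pow {1..int n}" by auto
  then have Kf: "finite ?K" by (rule finite_subset) auto
  have "Bstar g {}" unfolding Bstar_def by simp
  then have "0 \<in> ?K" by force
  then have "Max ?K \<in> ?K" using Kf by (intro Max_in) auto
  then obtain S where S: "R g n = card S" "S \<subseteq> {1..int n}" "Bstar g S" unfolding R_def by auto
  have Sf: "finite S" using S(2) finite_subset by blast
  define I where "I s = {(real_of_int s - 1)/n ..< real_of_int s / n}" for s :: int
  define A where "A = (\<Union>s\<in>S. I s)"
  have Im: "I s \<in> fmeasurable lebesgue" "measure lebesgue (I s) = 1 / n" for s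
  proof -
    have "(real_of_int s - 1)/n \<le> real_of_int s / n" using nr by (intro divide_right_mono) auto
    then show "I s \<in> fmeasurable lebesgue" "measure lebesgue (I s) = 1 / n"
      unfolding I_def using l4 l1 by (auto simp: diff_divide_distrib)
  qed
  have A01: "A \<subseteq> {0..<1}"
  proof
    fix x assume "x \<in> A"
    then obtain s where s: "s \<in> S" "x \<in> I s" unfolding A_def by blast
    have "1 \<le> s" "s \<le> int n" using s(1) S(2) by auto
    then have "1 \<le> real_of_int s" "real_of_int s \<le> real n" by linarith+
    moreover have "real_of_int s - 1 \<le> n * x" "n * x < real_of_int s" using s(2) nr unfolding I_def
      by (simp_all add: pos_divide_le_eq pos_divide_less_eq pos_less_divide_eq mult.commute)
    ultimately have "0 \<le> n * x" "n * x < n * 1" by linarith+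
    then show "x \<in> {0..<1}" using nr
      by (simp add: zero_le_mult_iff mult_less_cancel_left_pos)
  qed
  have Am: "A \<in> sets lebesgue" unfolding A_def using Sf Im by (intro sets.finite_UN) auto
  have disj: "disjoint_family_on I S"
    unfolding disjoint_family_on_def
  proof (intro ballI impI)
    fix s t assume st: "s \<in> S" "t \<in> S" "s \<noteq> t"
    show "I s \<inter> I t = {}"
    proof (rule ccontr)
      assume "I s \<inter> I t \<noteq> {}"
      then obtain x where "x \<in> I s" "x \<in> I t" by blast
      then have "real_of_int s - 1 \<le> n * x" "n * x < real_of_int s"
        "real_of_int t - 1 \<le> n * x" "n * x < real_of_int t" using nr unfolding I_def
        by (simp_all add: pos_divide_le_eq pos_divide_less_eq pos_less_divide_eq mult.commute)
      then have "s - 1 < t" "t - 1 < s" by linarith+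
      then show False using st(3) by linarith
    qed
  qed
  have mA: "measure lebesgue A = real (R g n) / real n"
  proof -
    have "measure lebesgue A = (\<Sum>s\<in>S. measure lebesgue (I s))"
      unfolding A_def
    proof (rule measure_finite_Union[OF Sf _ disj])
      show "I ` S \<subseteq> sets lebesgue" using Im(1) by blast
      fix s show "emeasure lebesgue (I s) \<noteq> \<infinity>" using emeasure_eq_measure2[OF Im(1)[of s]] by simp
    qed
    also have "\<dots> = card S * (1 / n)" using Im by simp
    finally show ?thesis using S(1) by simp
  qed
  have DA: "D A \<le> real g / real n"
    unfolding D_def
  proof (rule cSup_least)
    have "symmetric_set {}" unfolding symmetric_set_def by auto
    then show "{measure lebesgue C | C. C \<subseteq> A \<and> C \<in> sets lebesgue \<and> symmetric_set C} \<noteq> {}" by force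
  next
    fix y assume "y \<in> {measure lebesgue C | C. C \<subseteq> A \<and> C \<in> sets lebesgue \<and> symmetric_set C}"
    then obtain C where C: "y = measure lebesgue C" "C \<subseteq> A" "C \<in> sets lebesgue" "symmetric_set C" by blast
    then obtain c where c: "\<forall>x. c + x \<in> C \<longleftrightarrow> c - x \<in> C" unfolding symmetric_set_def by blast
    have "C \<subseteq> (\<Union>s\<in>S. {(real_of_int s - 1)/n ..< real_of_int s / n})"
      using C(2) unfolding A_def I_def .
    from key[OF n S(3) this C(3) c] show "y \<le> real g / real n" using C(1) by (simp only:)
  qed
  let ?T = "{D A |A. A \<subseteq> {0..<1} \<and> A \<in> sets lebesgue \<and> measure lebesgue A = real (R g n) / real n}"
  have mem: "D A \<in> ?T" using A01 Am mA by blast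
  have bdd: "bdd_below ?T"
  proof (rule bdd_belowI)
    fix y assume "y \<in> ?T"
    then obtain A' where "y = D A'" "A' \<subseteq> {0..<1}" by blast
    then show "0 \<le> y" using D_nonneg[of A'] by (simp only:)
  qed
  have "Delta (real (R g n) / real n) \<le> D A"
    unfolding Delta_def by (rule cInf_lower[OF mem bdd])
  then show ?thesis using DA by (rule order_trans)
qed
end
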